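(* Let $\varphi:\mathcal A\to\mathcal A$ be a continuous multiplicative map (i.e. $\varphi(AB)=\varphi(A)\varphi(B)$ for all $A,B\in\mathcal A$, not assumed linear) such that $\varphi(S)=S$ and $\varphi(\alpha I)=\alpha I$ for every $\alpha\in\mathbb C$. Then $\varphi$ is the identity map on $\mathcal A$.
   Context: $S$ denotes the $n\times n$ nilpotent Jordan block with ones on the superdiagonal and zeros elsewhere. $\mathcal A=\{f(S): f\text{ a complex polynomial}\}$ is the algebra of $n\times n$ upper-triangular Toeplitz matrices, equipped with the operator norm (induced by the Euclidean norm on $\mathbb C^n$). *)

theory Defs
  imports "Jordan_Normal_Form.Jordan_Normal_Form"
begin

definition S_mat :: "nat \<Rightarrow> complex mat" where
  "S_mat n = jordan_block n 0"

definition mat_poly_eval :: "complex poly \<Rightarrow> complex mat \<Rightarrow> complex mat" where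
  "mat_poly_eval f A = mat (dim_row A) (dim_col A)
     (\<lambda>(i,j). \<Sum>k\<le>degree f. coeff f k * (A ^\<^sub>m k) $$ (i,j))"

definition toeplitz_alg :: "nat \<Rightarrow> complex mat set" where
  "toeplitz_alg n = {mat_poly_eval f (S_mat n) | f. True}"

definition vec_enorm :: "complex vec \<Rightarrow> real" where
  "vec_enorm x = sqrt (\<Sum>i<dim_vec x. (cmod (x $ i))\<^sup>2)"

definition op_norm :: "complex mat \<Rightarrow> real" where
  "op_norm A = (SUP x\<in>{x. x \<in> carrier_vec (dim_col A) \<and> vec_enorm x = 1}. vec_enorm (A *\<^sub>v x))"

definition continuous_on_alg :: "nat \<Rightarrow> (complex mat \<Rightarrow> complex mat) \<Rightarrow> bool" where
  "continuous_on_alg n \<phi> \<longleftrightarrow> (\<forall>A\<in>toeplitz_alg n. \<forall>e>0. \<exists>d>0. \<forall>B\<in>toeplitz_alg n.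
      op_norm (B - A) < d \<longrightarrow> op_norm (\<phi> B - \<phi> A) < e)"

end

theory Submission
  imports Defs
begin

definition tmat :: "nat \<Rightarrow> (nat \<Rightarrow> complex) \<Rightarrow> complex mat" where
  "tmat n a = mat n n (\<lambda>(r,c). if r \<le> c then a (c - r) else 0)"

definition cv :: "(nat \<Rightarrow> complex) \<Rightarrow> (nat \<Rightarrow> complex) \<Rightarrow> nat \<Rightarrow> complex" where
  "cv a b l = (\<Sum>k\<le>l. a k * b (l - k))"

lemma tmat_carrier[simp]: "tmat n a \<in> carrier_mat n n"
  "dim_row (tmat n a) = n" "dim_col (tmat n a) = n"
  by (auto simp: tmat_def)

lemma tmat_index[simp]: "r < n \<Longrightarrow> c < n \<Longrightarrow> tmat n a $$ (r,c) = (if r \<le> c then a (c - r) else 0)"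
  by (simp add: tmat_def)

lemma tmat_eq: "(\<And>l. l < n \<Longrightarrow> a l = b l) \<Longrightarrow> tmat n a = tmat n b"
  by (rule eq_matI) auto

lemma tmat_mult: "tmat n a * tmat n b = tmat n (cv a b)"
proof (rule eq_matI)
  fix r c assume r: "r < dim_row (tmat n (cv a b))" and c: "c < dim_col (tmat n (cv a b))"
  hence rn: "r < n" and cn: "c < n" by auto
  have "(tmat n a * tmat n b) $$ (r,c) = (\<Sum>m\<in>{0..<n}. tmat n a $$ (r,m) * tmat n b $$ (m,c))"
    using rn cn by (simp add: scalar_prod_def)
  also have "\<dots> = (\<Sum>m\<in>{0..<n}. (if r \<le> m then a (m - r) else 0) * (if m \<le> c then b (c - m) else 0))"
    using rn cn by (intro sum.cong) auto
  also have "\<dots> = (if r \<le> c then cv a b (c - r) else 0)"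
  proof (cases "r \<le> c")
    case True
    have "(\<Sum>m\<in>{0..<n}. (if r \<le> m then a (m - r) else 0) * (if m \<le> c then b (c - m) else 0))
        = (\<Sum>m\<in>{r..c}. a (m - r) * b (c - m))"
      using cn by (intro sum.mono_neutral_cong_right) auto
    also have "\<dots> = (\<Sum>m\<in>{0 + r..(c - r) + r}. a (m - r) * b (c - m))" using True by simp
    also have "\<dots> = (\<Sum>k\<in>{0..c - r}. a k * b (c - r - k))"
      by (subst sum.shift_bounds_cl_nat_ivl) (simp add: diff_diff_add add.commute)
    also have "\<dots> = cv a b (c - r)" by (simp add: cv_def atLeast0AtMost)
    finally show ?thesis using True by simp
  next
    case False
    thus ?thesis by (intro trans[OF sum.neutral]) auto
  qed
  finally show "(tmat n a * tmat n b) $$ (r,c) = tmat n (cv a b) $$ (r,c)" using rn cn by simp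
qed auto

definition dl :: "nat \<Rightarrow> nat \<Rightarrow> complex" where "dl i = (\<lambda>l. if l = i then 1 else 0)"
definition sc :: "complex \<Rightarrow> nat \<Rightarrow> complex" where "sc \<alpha> = (\<lambda>l. if l = 0 then \<alpha> else 0)"

lemma cv_dl_left: "cv (dl i) a l = (if i \<le> l then a (l - i) else 0)"
proof -
  have "cv (dl i) a l = (\<Sum>k\<in>{..l}. if k = i then a (l - i) else 0)"
    unfolding cv_def dl_def by (intro sum.cong) auto
  thus ?thesis by simp
qed

lemma cv_comm: "cv a b = cv b a"
proof
  fix l
  have "cv a b l = (\<Sum>k\<le>l. a (l - k) * b (l - (l - k)))"
    unfolding cv_def by (rule sum.reindex_bij_witness[where i="\<lambda>k. l - k" and j="\<lambda>k. l - k"]) auto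
  also have "\<dots> = cv b a l" unfolding cv_def by (intro sum.cong) auto
  finally show "cv a b l = cv b a l" .
qed

lemma cv_dl_right: "cv a (dl i) l = (if i \<le> l then a (l - i) else 0)"
  by (subst cv_comm) (rule cv_dl_left)

lemma cv_dl_dl: "cv (dl i) (dl k) = dl (i + k)"
  by (rule ext) (simp add: cv_dl_left, simp add: dl_def, linarith)

lemma cv_sc: "cv (sc \<alpha>) b l = \<alpha> * b l"
proof -
  have "cv (sc \<alpha>) b l = (\<Sum>k\<in>{..l}. if k = 0 then \<alpha> * b l else 0)"
    unfolding cv_def sc_def by (intro sum.cong) auto
  thus ?thesis by simp
qed

lemma S_tmat: "S_mat n = tmat n (dl 1)"
  unfolding S_mat_def by (rule eq_matI) (auto simp: dl_def)

lemma one_tmat: "1\<^sub>m n = tmat n (dl 0)"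
  by (rule eq_matI) (auto simp: dl_def)

lemma scal_tmat: "\<alpha> \<cdot>\<^sub>m 1\<^sub>m n = tmat n (sc \<alpha>)"
  by (rule eq_matI) (auto simp: sc_def)

lemma S_dims[simp]: "dim_row (S_mat n) = n" "dim_col (S_mat n) = n"
  by (auto simp: S_tmat)

lemma S_pow: "S_mat n ^\<^sub>m k = tmat n (dl k)"
proof (induction k)
  case 0
  then show ?case by (simp add: S_tmat one_tmat)
next
  case (Suc k)
  then show ?case by (simp add: S_tmat tmat_mult cv_dl_dl)
qed

lemma poly_eval_tmat: "mat_poly_eval f (S_mat n) = tmat n (coeff f)"
proof (rule eq_matI)
  fix r c assume "r < dim_row (tmat n (coeff f))" "c < dim_col (tmat n (coeff f))"
  hence rn: "r < n" and cn: "c < n" by auto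
  have "mat_poly_eval f (S_mat n) $$ (r,c) = (\<Sum>k\<le>degree f. coeff f k * (if r \<le> c then dl k (c - r) else 0))"
    using rn cn by (simp add: mat_poly_eval_def S_pow)
  also have "\<dots> = (if r \<le> c then coeff f (c - r) else 0)"
  proof (cases "r \<le> c")
    case True
    have "(\<Sum>k\<le>degree f. coeff f k * (if r \<le> c then dl k (c - r) else 0))
       = (\<Sum>k\<in>{..degree f}. if k = c - r then coeff f (c - r) else 0)"
      using True by (intro sum.cong) (auto simp: dl_def)
    also have "\<dots> = coeff f (c - r)" by (auto simp: coeff_eq_0)
    finally show ?thesis using True by simp
  qed simp
  finally show "mat_poly_eval f (S_mat n) $$ (r,c) = tmat n (coeff f) $$ (r,c)" using rn cn by simp
qed (auto simp: mat_poly_eval_def)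

lemma alg_eq: "toeplitz_alg n = range (tmat n)"
proof -
  have "tmat n a \<in> toeplitz_alg n" for a
  proof -
    have "tmat n a = tmat n (coeff (Poly (map a [0..<n])))"
      by (rule tmat_eq) (simp add: nth_default_def)
    thus ?thesis unfolding toeplitz_alg_def poly_eval_tmat by blast
  qed
  thus ?thesis unfolding toeplitz_alg_def by (auto simp: poly_eval_tmat)
qed

lemma sqrt_sum_sq_le:
  fixes f :: "nat \<Rightarrow> real"
  assumes "\<And>i. i \<in> A \<Longrightarrow> 0 \<le> f i" "finite A"
  shows "sqrt (\<Sum>i\<in>A. (f i)\<^sup>2) \<le> (\<Sum>i\<in>A. f i)"
proof -
  have "(\<Sum>i\<in>A. (f i)\<^sup>2) \<le> (\<Sum>i\<in>A. f i * (\<Sum>i\<in>A. f i))"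
    unfolding power2_eq_square
    by (intro sum_mono mult_left_mono member_le_sum) (auto simp: assms)
  also have "\<dots> = (\<Sum>i\<in>A. f i)\<^sup>2" by (simp add: power2_eq_square sum_distrib_right)
  finally have "sqrt (\<Sum>i\<in>A. (f i)\<^sup>2) \<le> sqrt ((\<Sum>i\<in>A. f i)\<^sup>2)" by (rule real_sqrt_le_mono)
  also have "\<dots> = (\<Sum>i\<in>A. f i)" using assms by (simp add: sum_nonneg)
  finally show ?thesis .
qed

lemma enorm_comp: "i < dim_vec x \<Longrightarrow> cmod (x $ i) \<le> vec_enorm x"
proof -
  assume i: "i < dim_vec x"
  have "(cmod (x $ i))\<^sup>2 \<le> (\<Sum>k<dim_vec x. (cmod (x $ k))\<^sup>2)"
    using i by (intro member_le_sum) auto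
  hence "sqrt ((cmod (x $ i))\<^sup>2) \<le> vec_enorm x" unfolding vec_enorm_def by (rule real_sqrt_le_mono)
  thus ?thesis by simp
qed

lemma enorm_le_sum: "vec_enorm x \<le> (\<Sum>i<dim_vec x. cmod (x $ i))"
  unfolding vec_enorm_def by (rule sqrt_sum_sq_le) auto

definition msum :: "nat \<Rightarrow> complex mat \<Rightarrow> real" where
  "msum n A = (\<Sum>i<n. \<Sum>j<n. cmod (A $$ (i,j)))"

lemma mv_bound:
  assumes A: "A \<in> carrier_mat n n" and x: "x \<in> carrier_vec n" and nx: "vec_enorm x = 1"
  shows "vec_enorm (A *\<^sub>v x) \<le> msum n A"
proof -
  have "vec_enorm (A *\<^sub>v x) \<le> (\<Sum>i<n. cmod ((A *\<^sub>v x) $ i))"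
    using enorm_le_sum[of "A *\<^sub>v x"] A by simp
  also have "\<dots> \<le> (\<Sum>i<n. \<Sum>j<n. cmod (A $$ (i,j)))"
  proof (rule sum_mono)
    fix i assume "i \<in> {..<n}"
    hence i: "i < n" by simp
    have "(A *\<^sub>v x) $ i = (\<Sum>j\<in>{0..<n}. A $$ (i,j) * x $ j)"
      using i A x by (simp add: scalar_prod_def)
    hence "cmod ((A *\<^sub>v x) $ i) \<le> (\<Sum>j\<in>{0..<n}. cmod (A $$ (i,j) * x $ j))"
      by (simp add: norm_sum)
    also have "\<dots> \<le> (\<Sum>j\<in>{0..<n}. cmod (A $$ (i,j)))"
    proof (rule sum_mono)
      fix j assume "j \<in> {0..<n}"
      hence "cmod (x $ j) \<le> 1" using enorm_comp[of j x] x nx by auto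
      thus "cmod (A $$ (i,j) * x $ j) \<le> cmod (A $$ (i,j))"
        by (simp add: norm_mult mult_left_le)
    qed
    finally show "cmod ((A *\<^sub>v x) $ i) \<le> (\<Sum>j<n. cmod (A $$ (i,j)))" by (simp add: atLeast0LessThan)
  qed
  finally show ?thesis unfolding msum_def .
qed

lemma enorm_unit: "l < n \<Longrightarrow> vec_enorm (unit_vec n l :: complex vec) = 1"
proof -
  assume l: "l < n"
  have "(\<Sum>i<n. (cmod (unit_vec n l $ i :: complex))\<^sup>2) = (\<Sum>i\<in>{..<n}. if i = l then 1 else 0)"
    by (intro sum.cong) (auto simp: unit_vec_def)
  thus ?thesis using l unfolding vec_enorm_def by simp
qed

lemma op_norm_le:
  assumes A: "A \<in> carrier_mat n n" and n: "0 < n"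
  shows "op_norm A \<le> msum n A"
  unfolding op_norm_def
proof (rule cSUP_least)
  show "{x. x \<in> carrier_vec (dim_col A) \<and> vec_enorm x = 1} \<noteq> {}"
    using A n enorm_unit[of 0 n] by (intro ex_in_conv[THEN iffD1]) (auto intro!: exI[of _ "unit_vec n 0"])
  fix x assume "x \<in> {x. x \<in> carrier_vec (dim_col A) \<and> vec_enorm x = 1}"
  thus "vec_enorm (A *\<^sub>v x) \<le> msum n A" using mv_bound[OF A] A by auto
qed

lemma entry_le_op_norm:
  assumes A: "A \<in> carrier_mat n n" and i: "i < n" and l: "l < n"
  shows "cmod (A $$ (i,l)) \<le> op_norm A"
  unfolding op_norm_def
proof (rule cSUP_upper2)
  show "bdd_above ((\<lambda>x. vec_enorm (A *\<^sub>v x)) ` {x. x \<in> carrier_vec (dim_col A) \<and> vec_enorm x = 1})"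
    using mv_bound[OF A] A by (intro bdd_aboveI[of _ "msum n A"]) auto
  show "unit_vec n l \<in> {x. x \<in> carrier_vec (dim_col A) \<and> vec_enorm x = 1}"
    using A l enorm_unit[OF l] by auto
  have "(A *\<^sub>v unit_vec n l) $ i = (\<Sum>k\<in>{0..<n}. A $$ (i,k) * (if k = l then 1 else 0))"
    using A i l by (simp add: scalar_prod_def)
  also have "\<dots> = A $$ (i,l)" using l by (simp add: if_distrib cong: if_cong)
  finally have e: "(A *\<^sub>v unit_vec n l) $ i = A $$ (i,l)" .
  show "cmod (A $$ (i,l)) \<le> vec_enorm (A *\<^sub>v unit_vec n l)"
    using enorm_comp[of i "A *\<^sub>v unit_vec n l"] A i e by simp
qed

lemma cv_cong: "(\<And>k. k \<le> l \<Longrightarrow> a k = a' k) \<Longrightarrow> (\<And>k. k \<le> l \<Longrightarrow> b k = b' k) \<Longrightarrow> cv a b l = cv a' b' l"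
  unfolding cv_def by (intro sum.cong) auto

lemma cv_lin_left: "cv (\<lambda>k. x k + c * y k) a l = cv x a l + c * cv y a l"
  unfolding cv_def by (simp add: algebra_simps sum.distrib sum_distrib_left)

locale setting =
  fixes n :: nat and \<psi> :: "(nat \<Rightarrow> complex) \<Rightarrow> nat \<Rightarrow> complex"
  assumes n: "0 < n"
  and cong: "\<And>a b. (\<And>l. l < n \<Longrightarrow> a l = b l) \<Longrightarrow> \<psi> a = \<psi> b"
  and M: "\<And>a b l. l < n \<Longrightarrow> \<psi> (cv a b) l = cv (\<psi> a) (\<psi> b) l"
  and Sc: "\<And>\<alpha> l. l < n \<Longrightarrow> \<psi> (sc \<alpha>) l = sc \<alpha> l"
  and Dl: "\<And>i l. l < n \<Longrightarrow> \<psi> (dl i) l = dl i l"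
  and Ct: "\<And>a e. e > 0 \<Longrightarrow> \<exists>k::nat. k > 0 \<and>
             (\<forall>l<n. cmod (\<psi> (\<lambda>m. a m + sc (1 / of_nat k) m) l - \<psi> a l) < e)"
begin

lemma Mdl: "l < n \<Longrightarrow> \<psi> (cv a (dl s)) l = cv (\<psi> a) (dl s) l"
  using M[of l a "dl s"] Dl by (auto intro: cv_cong)

lemma modB:
  assumes m: "m \<le> n" and ab: "\<And>l. l < m \<Longrightarrow> a l = b l" and l: "l < m"
  shows "\<psi> a l = \<psi> b l"
proof -
  define s where "s = n - m"
  have "\<psi> (cv a (dl s)) = \<psi> (cv b (dl s))"
    by (rule cong) (auto simp: cv_dl_right s_def intro!: ab)
  moreover have "l + s < n" using m l s_def by auto
  ultimately have "cv (\<psi> a) (dl s) (l + s) = cv (\<psi> b) (dl s) (l + s)"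
    using Mdl by metis
  thus ?thesis by (simp add: cv_dl_right)
qed

lemma P1: "\<psi> a 0 = a 0"
proof -
  have "\<psi> a 0 = \<psi> (sc (a 0)) 0" by (rule modB[of 1]) (use n in \<open>auto simp: sc_def\<close>)
  also have "\<dots> = a 0" using Sc[of 0 "a 0"] n by (simp add: sc_def)
  finally show ?thesis .
qed


context
  fixes j :: nat
  assumes j1: "1 \<le> j" and jn: "j < n" and Pj: "\<And>a l. l < j \<Longrightarrow> \<psi> a l = a l"
begin

definition D where "D a = \<psi> a j - a j"

lemma F1: "l \<le> j \<Longrightarrow> \<psi> a l = a l + (if l = j then D a else 0)"
  using Pj[of l a] by (cases "l = j") (auto simp: D_def)

lemma F2: "D (cv a b) = a 0 * D b + b 0 * D a"
proof -
  have "\<psi> (cv a b) j = (\<Sum>k\<le>j. \<psi> a k * \<psi> b (j - k))" using M jn by (simp add: cv_def)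
  also have "\<dots> = (\<Sum>k\<le>j. a k * b (j - k) + (if k = 0 then a 0 * D b else 0) + (if k = j then D a * b 0 else 0))"
  proof (rule sum.cong)
    fix k assume "k \<in> {..j}"
    hence k: "k \<le> j" by simp
    have "\<psi> a k = a k + (if k = j then D a else 0)" using F1 k .
    moreover have "\<psi> b (j - k) = b (j - k) + (if k = 0 then D b else 0)"
      using F1[of "j - k" b] k j1 by (cases "k = 0") auto
    ultimately show "\<psi> a k * \<psi> b (j - k) = a k * b (j - k) + (if k = 0 then a 0 * D b else 0) + (if k = j then D a * b 0 else 0)"
      using j1 by (auto simp: algebra_simps)
  qed simp
  also have "\<dots> = cv a b j + a 0 * D b + D a * b 0"
    by (simp add: sum.distrib cv_def)
  finally show ?thesis by (simp add: D_def algebra_simps)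
qed

lemma D_sc: "D (sc \<alpha>) = 0" using Sc jn by (simp add: D_def)
lemma D_dl: "D (dl i) = 0" using Dl jn by (simp add: D_def)

lemma D_cong: "(\<And>l. l \<le> j \<Longrightarrow> a l = b l) \<Longrightarrow> D a = D b"
  using modB[of "Suc j" a b j] jn by (simp add: D_def)

lemma F4: "a 0 = 0 \<Longrightarrow> D a = 0"
proof -
  assume a0: "a 0 = 0"
  have "a = cv (dl 1) (\<lambda>l. a (Suc l))"
    using a0 by (intro ext) (auto simp: cv_dl_left simp del: One_nat_def elim: not_less_eq_eq[THEN iffD1, elim_format])
  hence "D a = D (cv (dl 1) (\<lambda>l. a (Suc l)))" by simp
  also have "\<dots> = 0" using D_dl[of 1] by (simp add: F2 dl_def)
  finally show ?thesis .
qed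

lemma F5: "a 0 \<noteq> 0 \<Longrightarrow> D a = a 0 * D (\<lambda>l. a l / a 0)"
proof -
  assume a0: "a 0 \<noteq> 0"
  have "a = cv (sc (a 0)) (\<lambda>l. a l / a 0)"
    using a0 by (intro ext) (simp add: cv_sc)
  hence "D a = D (cv (sc (a 0)) (\<lambda>l. a l / a 0))" by simp
  also have "\<dots> = a 0 * D (\<lambda>l. a l / a 0)" using D_sc[of "a 0"] by (simp add: F2 sc_def)
  finally show ?thesis .
qed

definition Q where "Q i \<longleftrightarrow> (\<forall>a. a 0 = 1 \<longrightarrow> (\<forall>l. 0 < l \<and> l < i \<longrightarrow> a l = 0) \<longrightarrow> D a = 0)"

lemma Q_top: "Q (Suc j)"
  unfolding Q_def
proof (intro allI impI)
  fix a :: "nat \<Rightarrow> complex" assume "a 0 = 1" "\<forall>l. 0 < l \<and> l < Suc j \<longrightarrow> a l = 0"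
  hence "D a = D (sc 1)" by (intro D_cong) (auto simp: sc_def)
  thus "D a = 0" by (simp add: D_sc)
qed


context
  fixes i :: nat
  assumes i1: "1 \<le> i" and ij: "i \<le> j" and Qi: "Q (Suc i)"
begin

definition e where "e c = (\<lambda>l. sc 1 l + c * dl i l)"
definition g where "g c = D (e c)"

lemma cv_e: "cv (e c) a l = a l + c * (if i \<le> l then a (l - i) else 0)"
  unfolding e_def by (simp add: cv_lin_left cv_sc cv_dl_left)

lemma e0[simp]: "e c 0 = 1" using i1 by (simp add: e_def sc_def dl_def)
lemma ei[simp]: "e c i = c" using i1 by (simp add: e_def sc_def dl_def)
lemma emid: "0 < l \<Longrightarrow> l \<noteq> i \<Longrightarrow> e c l = 0" by (simp add: e_def sc_def dl_def)

lemma L1: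
  assumes a0: "a 0 = 1" and az: "\<And>l. 0 < l \<Longrightarrow> l < i \<Longrightarrow> a l = 0"
  shows "D a = - g (- a i)"
proof -
  define b where "b = cv (e (- a i)) a"
  have "D b = 0" using Qi unfolding Q_def
  proof (elim allE impE)
    show "b 0 = 1" using a0 i1 by (simp add: b_def cv_e)
    show "\<forall>l. 0 < l \<and> l < Suc i \<longrightarrow> b l = 0"
    proof (intro allI impI)
      fix l assume l: "0 < l \<and> l < Suc i"
      show "b l = 0"
      proof (cases "l = i")
        case True thus ?thesis using a0 by (simp add: b_def cv_e)
      next
        case False thus ?thesis using l az by (simp add: b_def cv_e)
      qed
    qed
  qed
  moreover have "D b = D a + g (- a i)" unfolding b_def by (simp add: F2 a0 g_def)
  ultimately show ?thesis by (simp add: eq_neg_iff_add_eq_0)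
qed

lemma g_neg: "g c = - g (- c)"
  using L1[of "e c"] emid unfolding g_def by simp

lemma g_add: "g (c + c') = g c + g c'"
proof -
  define b where "b = cv (e c') (e c)"
  have "D b = - g (- (c + c'))"
  proof -
    have "D b = - g (- b i)"
      by (rule L1) (use i1 in \<open>auto simp: b_def cv_e emid\<close>)
    moreover have "b i = e c i + c' * e c 0" unfolding b_def cv_e by simp
    hence "b i = c + c'" by simp
    ultimately show ?thesis by simp
  qed
  moreover have "D b = g c + g c'" by (simp add: b_def F2 g_def)
  ultimately show ?thesis using g_neg[of "c + c'"] by simp
qed

lemma g_nat: "g (of_nat k * c) = of_nat k * g c"
proof (induction k)
  case 0
  have "g 0 = g 0 + g 0" using g_add[of 0 0] by simp
  thus ?case by simp
next
  case (Suc k)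
  have "g (of_nat (Suc k) * c) = g (of_nat k * c + c)" by (simp add: algebra_simps)
  also have "\<dots> = of_nat (Suc k) * g c" using Suc by (simp add: g_add algebra_simps)
  finally show ?case .
qed

lemma g_zero: "g c = 0"
proof (rule ccontr)
  assume gc: "g c \<noteq> 0"
  define a where "a = (\<lambda>m. c * dl i m)"
  obtain k :: nat where k: "k > 0" and
    kk: "\<forall>l<n. cmod (\<psi> (\<lambda>m. a m + sc (1 / of_nat k) m) l - \<psi> a l) < cmod (g c)"
    using Ct[of "cmod (g c)" a] gc by auto
  define b where "b = (\<lambda>m. a m + sc (1 / of_nat k) m)"
  have kc: "(of_nat k :: complex) \<noteq> 0" using k by simp
  have b_eq: "b = cv (sc (1 / of_nat k)) (e (of_nat k * c))"
    using kc by (intro ext) (simp only: cv_sc, simp add: b_def a_def e_def sc_def dl_def algebra_simps)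
  have Db: "D b = g c"
  proof -
    have "D b = 1 / of_nat k * g (of_nat k * c)"
      unfolding b_eq using D_sc[of "1 / of_nat k"] by (simp add: F2 g_def sc_def)
    also have "\<dots> = g c" using kc by (simp add: g_nat)
    finally show ?thesis .
  qed
  have Da: "D a = 0" using i1 by (intro F4) (simp add: a_def dl_def)
  have bj: "b j = a j" using j1 by (simp add: b_def sc_def)
  have "\<psi> b j - \<psi> a j = g c" using Db Da bj by (simp add: D_def algebra_simps)
  moreover have "cmod (\<psi> b j - \<psi> a j) < cmod (g c)" using kk jn by (simp add: b_def)
  ultimately show False by simp
qed

lemma Q_down: "Q i"
  unfolding Q_def
proof (intro allI impI)
  fix a :: "nat \<Rightarrow> complex" assume "a 0 = 1" "\<forall>l. 0 < l \<and> l < i \<longrightarrow> a l = 0"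
  thus "D a = 0" using L1[of a] g_zero by simp
qed

end

lemma Q_all: "m \<le> j \<Longrightarrow> Q (Suc j - m)"
proof (induction m)
  case 0 thus ?case using Q_top by simp
next
  case (Suc m)
  have "Q (Suc j - m)" using Suc by simp
  moreover have "Suc j - m = Suc (j - m)" using Suc.prems by arith
  ultimately have q: "Q (Suc (j - m))" by simp
  have "Q (j - m)" by (rule Q_down) (use Suc.prems q in simp_all)
  thus ?case by simp
qed

lemma D_zero: "D a = 0"
proof (cases "a 0 = 0")
  case True thus ?thesis by (rule F4)
next
  case False
  have q1: "Q 1" using Q_all[of j] by simp
  have "(\<lambda>l. a l / a 0) 0 = 1" using False by simp
  hence "D (\<lambda>l. a l / a 0) = 0" using q1 unfolding Q_def
    by (elim allE[of _ "\<lambda>l. a l / a 0"]) auto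
  thus ?thesis using F5[of a] False by simp
qed

lemma step: "\<psi> a j = a j" using D_zero[of a] by (simp add: D_def)


end

lemma upto: "j \<le> n \<Longrightarrow> l < j \<Longrightarrow> \<psi> a l = a l"
proof (induction j arbitrary: l a)
  case 0 thus ?case by simp
next
  case (Suc j)
  show ?case
  proof (cases "j = 0")
    case True thus ?thesis using Suc P1 by simp
  next
    case False
    have IH: "\<And>a l. l < j \<Longrightarrow> \<psi> a l = a l" using Suc.IH Suc.prems by simp
    have "\<psi> a j = a j"
    proof (rule step)
      show "1 \<le> j" using False by simp
      show "j < n" using Suc.prems by simp
      show "\<And>a l. l < j \<Longrightarrow> \<psi> a l = a l" by (rule IH)
    qed
    show ?thesis
    proof (cases "l = j")
      case True thus ?thesis using \<open>\<psi> a j = a j\<close> by simp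
    next
      case False thus ?thesis using IH Suc.prems by simp
    qed
  qed
qed

lemma main: "l < n \<Longrightarrow> \<psi> a l = a l" using upto[of n] by simp

end


lemma msum_sc: "msum n (tmat n (sc c)) = of_nat n * cmod c"
proof -
  have "msum n (tmat n (sc c)) = (\<Sum>i<n. \<Sum>j\<in>{..<n}. if j = i then cmod c else 0)"
    unfolding msum_def by (intro sum.cong) (auto simp: sc_def)
  thus ?thesis by simp
qed

theorem lemma2p3:
  fixes n :: nat and \<phi> :: "complex mat \<Rightarrow> complex mat"
  assumes maps: "\<forall>A\<in>toeplitz_alg n. \<phi> A \<in> toeplitz_alg n"
    and cont: "continuous_on_alg n \<phi>"
    and mult: "\<forall>A\<in>toeplitz_alg n. \<forall>B\<in>toeplitz_alg n. \<phi> (A * B) = \<phi> A * \<phi> B"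
    and fixS: "\<phi> (S_mat n) = S_mat n"
    and scal: "\<forall>\<alpha>::complex. \<phi> (\<alpha> \<cdot>\<^sub>m 1\<^sub>m n) = \<alpha> \<cdot>\<^sub>m 1\<^sub>m n"
  shows "\<forall>A\<in>toeplitz_alg n. \<phi> A = A"
proof (cases "n = 0")
  case True
  show ?thesis
  proof
    fix A assume A: "A \<in> toeplitz_alg n"
    then obtain a where a: "A = tmat n a" by (auto simp: alg_eq)
    from maps A obtain b where b: "\<phi> A = tmat n b" by (auto simp: alg_eq)
    have "tmat n b = tmat n a" using True by (intro tmat_eq) simp
    thus "\<phi> A = A" using a b by simp
  qed
next
  case False
  hence n: "0 < n" by simp
  define \<psi> where "\<psi> a = (\<lambda>l. \<phi> (tmat n a) $$ (0, l))" for a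
  have inalg: "tmat n a \<in> toeplitz_alg n" for a by (simp add: alg_eq)
  have phiT: "\<phi> (tmat n a) = tmat n (\<psi> a)" for a
  proof -
    from maps inalg[of a] obtain b where b: "\<phi> (tmat n a) = tmat n b" by (auto simp: alg_eq)
    show ?thesis unfolding b \<psi>_def using n by (intro tmat_eq) simp
  qed
  have idx: "l < n \<Longrightarrow> tmat n a $$ (0, l) = a l" for a l using n by simp
  have cong: "\<psi> a = \<psi> b" if "\<And>l. l < n \<Longrightarrow> a l = b l" for a b
    unfolding \<psi>_def using tmat_eq[of n a b] that by simp
  have M: "\<psi> (cv a b) l = cv (\<psi> a) (\<psi> b) l" if "l < n" for a b l
  proof -
    have "tmat n (\<psi> (cv a b)) = tmat n (cv (\<psi> a) (\<psi> b))"
      using mult inalg[of a] inalg[of b] by (simp add: phiT[symmetric] tmat_mult[symmetric])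
    hence "tmat n (\<psi> (cv a b)) $$ (0,l) = tmat n (cv (\<psi> a) (\<psi> b)) $$ (0,l)" by simp
    thus ?thesis using idx that by simp
  qed
  have Sc: "\<psi> (sc \<alpha>) l = sc \<alpha> l" if "l < n" for \<alpha> l
  proof -
    have "tmat n (\<psi> (sc \<alpha>)) = tmat n (sc \<alpha>)"
      using scal by (simp add: phiT[symmetric] scal_tmat[symmetric])
    hence "tmat n (\<psi> (sc \<alpha>)) $$ (0,l) = tmat n (sc \<alpha>) $$ (0,l)" by simp
    thus ?thesis using idx that by simp
  qed
  have phiS: "\<phi> (tmat n (dl k)) = tmat n (dl k)" for k
  proof (induction k)
    case 0
    have "tmat n (dl 0) = 1 \<cdot>\<^sub>m 1\<^sub>m n" by (simp only: scal_tmat) (simp add: sc_def dl_def)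
    thus ?case using scal by metis
  next
    case (Suc k)
    have "tmat n (dl (Suc k)) = tmat n (dl k) * tmat n (dl 1)" by (simp add: tmat_mult cv_dl_dl)
    moreover have "\<phi> (tmat n (dl 1)) = tmat n (dl 1)" using fixS by (simp add: S_tmat)
    ultimately show ?case using mult inalg Suc by simp
  qed
  have Dl: "\<psi> (dl i) l = dl i l" if "l < n" for i l
  proof -
    have "tmat n (\<psi> (dl i)) $$ (0,l) = tmat n (dl i) $$ (0,l)" using phiS phiT by metis
    thus ?thesis using idx that by simp
  qed
  have Ct: "\<exists>k::nat. k > 0 \<and> (\<forall>l<n. cmod (\<psi> (\<lambda>m. a m + sc (1 / of_nat k) m) l - \<psi> a l) < e)"
    if e: "e > 0" for a e
  proof -
    obtain d where d: "d > 0" and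
      dd: "\<forall>B\<in>toeplitz_alg n. op_norm (B - tmat n a) < d \<longrightarrow> op_norm (\<phi> B - \<phi> (tmat n a)) < e"
      using cont e inalg[of a] unfolding continuous_on_alg_def by blast
    obtain k :: nat where k: "real n / d < real k" using reals_Archimedean2 by blast
    have "real n / d \<ge> 0" using d by simp
    hence kpos: "k > 0" using k by (cases k) auto
    define b where "b = (\<lambda>m. a m + sc (1 / of_nat k) m)"
    have diff: "tmat n b - tmat n a = tmat n (sc (1 / of_nat k))"
      by (rule eq_matI) (auto simp: b_def)
    have "op_norm (tmat n b - tmat n a) \<le> real n * (1 / real k)"
      using op_norm_le[of "tmat n (sc (1 / of_nat k))" n] n unfolding diff msum_sc
      by (simp add: norm_divide)
    also have "\<dots> < d"
    proof -
      have "real n < real k * d" using k d by (simp add: divide_less_eq)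
      thus ?thesis using kpos by (simp add: divide_less_eq mult.commute)
    qed
    finally have lt: "op_norm (tmat n b - tmat n a) < d" .
    have "op_norm (\<phi> (tmat n b) - \<phi> (tmat n a)) < e" using dd inalg[of b] lt by simp
    hence on: "op_norm (tmat n (\<psi> b) - tmat n (\<psi> a)) < e" by (simp add: phiT)
    have "\<forall>l<n. cmod (\<psi> b l - \<psi> a l) < e"
    proof (intro allI impI)
      fix l assume l: "l < n"
      have "cmod ((tmat n (\<psi> b) - tmat n (\<psi> a)) $$ (0,l)) \<le> op_norm (tmat n (\<psi> b) - tmat n (\<psi> a))"
        by (rule entry_le_op_norm[of _ n]) (use n l in auto)
      moreover have "(tmat n (\<psi> b) - tmat n (\<psi> a)) $$ (0,l) = \<psi> b l - \<psi> a l" using n l by simp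
      ultimately show "cmod (\<psi> b l - \<psi> a l) < e" using on by simp
    qed
    thus ?thesis using kpos unfolding b_def by blast
  qed
  interpret setting n \<psi>
  proof unfold_locales
    show "0 < n" by (rule n)
    show "\<psi> a = \<psi> b" if "\<And>l. l < n \<Longrightarrow> a l = b l" for a b using that by (rule cong)
    show "\<psi> (cv a b) l = cv (\<psi> a) (\<psi> b) l" if "l < n" for a b l using that by (rule M)
    show "\<psi> (sc \<alpha>) l = sc \<alpha> l" if "l < n" for \<alpha> l using that by (rule Sc)
    show "\<psi> (dl i) l = dl i l" if "l < n" for i l using that by (rule Dl)
    show "\<exists>k::nat. k > 0 \<and> (\<forall>l<n. cmod (\<psi> (\<lambda>m. a m + sc (1 / of_nat k) m) l - \<psi> a l) < e)"
      if "e > 0" for a e using that by (rule Ct)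
  qed
  show ?thesis
  proof
    fix A assume "A \<in> toeplitz_alg n"
    then obtain a where a: "A = tmat n a" by (auto simp: alg_eq)
    show "\<phi> A = A" unfolding a phiT by (intro tmat_eq main)
  qed
qed

end
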